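(* Let $\Theta=(\theta_k)_{k\ge1}$ be a sequence of positive real numbers such that the series $g(z)=\sum_{k\ge1}\frac{\theta_k}{k}z^k$ has radius of convergence $r\in(0,\infty)$, i.e. $\frac1r=\limsup_k\theta_k^{1/k}$. Let $(Y_\ell)_{\ell\ge1}$ be independent Poisson random variables, $Y_\ell$ with parameter $\frac{r^\ell\theta_\ell}{\ell}$, let $X_k=\sum_{\ell\mid k}\ell Y_\ell$ and $f(z)=\sum_{k\ge1}\frac{X_k}{k}z^k$. Then almost surely the radius of convergence of the power series $f$ is greater than or equal to $1$. *)

theory Defs
  imports "HOL-Analysis.Analysis" "HOL-Probability.Probability"
begin

end

theory Submission
  imports Defs
begin


lemma poisson_mean:
  fixes c :: real assumes c: "0 < c"
  shows "(\<integral>\<^sup>+x. ennreal (real x) \<partial>measure_pmf (poisson_pmf c)) = ennreal c"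
proof -
  define f where "f = (\<lambda>x::nat. real x * (c ^ x / fact x * exp (-c)))"
  have "(\<lambda>j. (c * exp (-c)) * (c ^ j /\<^sub>R fact j)) sums ((c * exp (-c)) * exp c)"
    by (intro sums_mult exp_converges)
  also have "(c * exp (-c)) * exp c = c" by (simp add: exp_minus field_simps)
  finally have "(\<lambda>j. f (Suc j)) sums c"
  proof (rule sums_cong[THEN iffD1, rotated])
    fix j
    have fj: "fact (Suc j) = real (Suc j) * fact j" by (simp add: fact_Suc)
    have nz: "real (Suc j) \<noteq> 0" "(fact j :: real) \<noteq> 0" by simp_all
    show "c * exp (- c) * (c ^ j /\<^sub>R fact j) = f (Suc j)"
      unfolding f_def fj using nz by (simp add: field_simps del: of_nat_Suc)
  qed
  then have fs: "f sums c" using sums_Suc_iff[of f c] by (simp add: f_def)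
  have "(\<integral>\<^sup>+x. ennreal (real x) \<partial>measure_pmf (poisson_pmf c))
      = (\<integral>\<^sup>+x. ennreal (f x) \<partial>count_space UNIV)"
    unfolding nn_integral_measure_pmf using c
    by (intro nn_integral_cong) (simp add: f_def ennreal_mult'[symmetric] mult.commute)
  also have "\<dots> = (\<Sum>x. ennreal (f x))" by (rule nn_integral_count_space_nat)
  also have "\<dots> = ennreal c" using fs c by (intro suminf_ennreal_eq) (auto simp: f_def)
  finally show ?thesis .
qed



lemma det_bound:
  fixes y :: "nat \<Rightarrow> nat" and \<rho> :: real
  assumes r0: "0 < \<rho>" and r1: "\<rho> < 1" and sm: "summable (\<lambda>l. real (y l) * \<rho> ^ l)"
  shows "ereal (\<rho> ^ 3) \<le> conv_radius (\<lambda>k. real (\<Sum>l\<in>{l\<in>{1..k}. l dvd k}. l * y l) / real k)"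
proof -
  have "(\<lambda>l. real (y l) * \<rho> ^ l) \<longlonglongrightarrow> 0" using sm by (rule summable_LIMSEQ_zero)
  then have "Bseq (\<lambda>l. real (y l) * \<rho> ^ l)" using convergent_imp_Bseq convergentI by blast
  then obtain C where C: "\<And>l. norm (real (y l) * \<rho> ^ l) \<le> C" unfolding Bseq_def by auto
  have "(\<lambda>n. of_nat n * \<rho> ^ n) \<longlonglongrightarrow> (0::real)" using r0 r1 by (intro powser_times_n_limit_0) simp
  then have "Bseq (\<lambda>n. of_nat n * \<rho> ^ n :: real)" using convergent_imp_Bseq convergentI by blast
  then obtain B where B: "\<And>n. norm (of_nat n * \<rho> ^ n :: real) \<le> B" unfolding Bseq_def by auto
  define a where "a = (\<lambda>k. real (\<Sum>l\<in>{l\<in>{1..k}. l dvd k}. l * y l) / real k)"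
  have a_nn: "a k \<ge> 0" for k unfolding a_def by (intro divide_nonneg_nonneg of_nat_0_le_iff)
  have yb: "real (y l) \<le> C / \<rho> ^ k" if "l \<le> k" for l k
  proof -
    have "real (y l) * \<rho> ^ k \<le> real (y l) * \<rho> ^ l"
      using that r0 r1 by (intro mult_left_mono power_decreasing) auto
    also have "\<dots> \<le> C" using C[of l] r0 by simp
    finally show ?thesis using r0 by (simp add: field_simps)
  qed
  have abound: "a k \<le> real k * (C / \<rho> ^ k)" for k
  proof (cases "k = 0")
    case True then show ?thesis by (simp add: a_def)
  next
    case False
    let ?S = "{l\<in>{1..k}. l dvd k}"
    have "real (\<Sum>l\<in>?S. l * y l) = (\<Sum>l\<in>?S. real l * real (y l))" by simp
    also have "\<dots> \<le> (\<Sum>l\<in>?S. real k * (C / \<rho> ^ k))"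
    proof (rule sum_mono)
      fix l assume "l \<in> ?S"
      then have lk: "l \<le> k" by simp
      show "real l * real (y l) \<le> real k * (C / \<rho> ^ k)"
        by (rule mult_mono) (use lk yb[OF lk] in simp_all)
    qed
    also have "\<dots> = real (card ?S) * (real k * (C / \<rho> ^ k))" by simp
    also have "\<dots> \<le> real k * (real k * (C / \<rho> ^ k))"
    proof (intro mult_right_mono)
      have "card ?S \<le> card {1..k}" by (intro card_mono) auto
      then show "real (card ?S) \<le> real k" by simp
      have "0 \<le> C" using C[of 0] by (meson norm_ge_zero order_trans)
      then show "0 \<le> real k * (C / \<rho> ^ k)" using r0 by simp
    qed
    finally have h: "real (\<Sum>l\<in>?S. l * y l) \<le> real k * (real k * (C / \<rho> ^ k))" .
    have kp: "0 < real k" using False by simp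
    show ?thesis unfolding a_def using pos_divide_le_eq[OF kp] h by (metis mult.commute)
  qed
  have "summable (\<lambda>k. a k * (\<rho>^3) ^ k)"
  proof (rule summable_comparison_test')
    show "summable (\<lambda>k. (C * B) * \<rho> ^ k)" using r0 r1 by (intro summable_mult summable_geometric) simp
    fix k
    have "norm (a k * (\<rho>^3) ^ k) = a k * (\<rho>^3) ^ k" using a_nn r0 by simp
    also have "\<dots> \<le> real k * (C / \<rho> ^ k) * (\<rho>^3) ^ k"
      by (rule mult_right_mono[OF abound]) (use r0 in simp)
    also have "\<dots> = C * (real k * \<rho> ^ k) * \<rho> ^ k"
    proof -
      have e: "(\<rho>^3) ^ k = \<rho>^k * \<rho>^k * \<rho>^k" by (metis power3_eq_cube power_mult_distrib)
      have "\<rho>^k \<noteq> 0" using r0 by simp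
      then show ?thesis unfolding e by (simp add: field_simps)
    qed
    also have "\<dots> \<le> C * B * \<rho> ^ k"
    proof -
      have "0 \<le> C" using C[of 0] by (meson norm_ge_zero order_trans)
      moreover have "real k * \<rho> ^ k \<le> B" using B[of k] r0 by simp
      ultimately show ?thesis using r0 by (intro mult_right_mono mult_left_mono) auto
    qed
    finally show "norm (a k * (\<rho>^3) ^ k) \<le> C * B * \<rho> ^ k" .
  qed
  then have "conv_radius a \<ge> norm (\<rho>^3)" by (rule conv_radius_geI)
  then show ?thesis using r0 unfolding a_def by simp
qed


lemma AE_summable_rho:
  fixes M :: "'a measure" and \<theta> :: "nat \<Rightarrow> real" and r :: real
    and Y :: "nat \<Rightarrow> 'a \<Rightarrow> nat" and \<rho> :: real
  assumes "prob_space M"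
    and \<theta>_pos: "\<And>k. k \<ge> 1 \<Longrightarrow> \<theta> k > 0"
    and r_pos: "0 < r"
    and radius: "conv_radius (\<lambda>k. \<theta> k / real k) = ereal r"
    and meas: "\<And>l. l \<ge> 1 \<Longrightarrow> Y l \<in> M \<rightarrow>\<^sub>M count_space UNIV"
    and poisson: "\<And>l. l \<ge> 1 \<Longrightarrow>
       distr M (count_space UNIV) (Y l) = measure_pmf (poisson_pmf (r ^ l * \<theta> l / real l))"
    and r0: "0 < \<rho>" and r1: "\<rho> < 1"
  shows "AE \<omega> in M. summable (\<lambda>l. real (Y l \<omega>) * \<rho> ^ l)"
proof -
  define lam where "lam = (\<lambda>l::nat. r ^ l * \<theta> l / real l)"
  have lam_pos: "lam l > 0" if "l \<ge> 1" for l
    using \<theta>_pos[OF that] r_pos that by (simp add: lam_def)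
  define F where "F = (\<lambda>l \<omega>. ennreal (real (Y (Suc l) \<omega>) * \<rho> ^ Suc l))"
  have Fm: "F l \<in> borel_measurable M" for l
  proof -
    have "(\<lambda>x::nat. ennreal (real x * \<rho> ^ Suc l)) \<in> borel_measurable (count_space UNIV)" by simp
    from measurable_compose[OF meas[of "Suc l"] this] show ?thesis unfolding F_def by simp
  qed
  have Fint: "(\<integral>\<^sup>+\<omega>. F l \<omega> \<partial>M) = ennreal (lam (Suc l) * \<rho> ^ Suc l)" for l
  proof -
    have "(\<integral>\<^sup>+\<omega>. F l \<omega> \<partial>M) = (\<integral>\<^sup>+\<omega>. ennreal (\<rho> ^ Suc l) * ennreal (real (Y (Suc l) \<omega>)) \<partial>M)"
      unfolding F_def using r0 by (intro nn_integral_cong) (simp add: ennreal_mult'[symmetric] mult.commute)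
    also have "\<dots> = ennreal (\<rho> ^ Suc l) * (\<integral>\<^sup>+\<omega>. ennreal (real (Y (Suc l) \<omega>)) \<partial>M)"
    proof (rule nn_integral_cmult)
      have "(\<lambda>x::nat. ennreal (real x)) \<in> borel_measurable (count_space UNIV)" by simp
      from measurable_compose[OF meas[of "Suc l"] this]
      show "(\<lambda>\<omega>. ennreal (real (Y (Suc l) \<omega>))) \<in> borel_measurable M" by simp
    qed
    also have "(\<integral>\<^sup>+\<omega>. ennreal (real (Y (Suc l) \<omega>)) \<partial>M)
        = (\<integral>\<^sup>+x. ennreal (real x) \<partial>distr M (count_space UNIV) (Y (Suc l)))"
      by (rule nn_integral_distr[symmetric]) (use meas[of "Suc l"] in simp_all)
    also have "\<dots> = ennreal (lam (Suc l))"
    proof -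
      have "distr M (count_space UNIV) (Y (Suc l)) = measure_pmf (poisson_pmf (lam (Suc l)))"
        using poisson[of "Suc l"] by (simp add: lam_def)
      then show ?thesis by (simp add: poisson_mean lam_pos)
    qed
    finally show ?thesis using r0 lam_pos[of "Suc l"]
      by (simp add: ennreal_mult'[symmetric] mult.commute)
  qed
  have sm: "summable (\<lambda>l. lam (Suc l) * \<rho> ^ Suc l)"
  proof -
    have "ereal (norm (r * \<rho>)) < conv_radius (\<lambda>k. \<theta> k / real k)"
      using r0 r1 r_pos unfolding radius by simp
    from abs_summable_in_conv_radius[OF this]
    have "summable (\<lambda>n. norm (\<theta> n / real n * (r * \<rho>) ^ n))" .
    then have s2: "summable (\<lambda>n. norm (\<theta> (Suc n) / real (Suc n) * (r * \<rho>) ^ Suc n))"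
      by (subst summable_Suc_iff)
    show ?thesis
    proof (rule summable_comparison_test'[OF s2])
      fix n
      have "lam (Suc n) * \<rho> ^ Suc n = \<theta> (Suc n) / real (Suc n) * (r * \<rho>) ^ Suc n"
        unfolding lam_def by (simp add: power_mult_distrib field_simps del: of_nat_Suc)
      then show "norm (lam (Suc n) * \<rho> ^ Suc n) \<le> norm (\<theta> (Suc n) / real (Suc n) * (r * \<rho>) ^ Suc n)"
        by simp
    qed
  qed
  have "(\<integral>\<^sup>+\<omega>. (\<Sum>l. F l \<omega>) \<partial>M) = (\<Sum>l. ennreal (lam (Suc l) * \<rho> ^ Suc l))"
    using nn_integral_suminf[OF Fm] Fint by simp
  also have "\<dots> = ennreal (\<Sum>l. lam (Suc l) * \<rho> ^ Suc l)"
    using sm lam_pos r0 by (intro suminf_ennreal2) (auto intro: less_imp_le)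
  finally have ne: "(\<integral>\<^sup>+\<omega>. (\<Sum>l. F l \<omega>) \<partial>M) \<noteq> \<infinity>" by simp
  have "AE \<omega> in M. (\<Sum>l. F l \<omega>) \<noteq> \<infinity>"
    by (rule nn_integral_noteq_infinite[OF _ ne]) (use Fm in measurable)
  then show ?thesis
  proof (rule eventually_mono)
    fix \<omega> assume "(\<Sum>l. F l \<omega>) \<noteq> \<infinity>"
    then have "summable (\<lambda>l. real (Y (Suc l) \<omega>) * \<rho> ^ Suc l)"
      unfolding F_def using r0 by (intro summable_suminf_not_top) auto
    then show "summable (\<lambda>l. real (Y l \<omega>) * \<rho> ^ l)" by (subst (asm) summable_Suc_iff)
  qed
qed

theorem mainTheorem6:
  fixes M :: "'a measure" and \<theta> :: "nat \<Rightarrow> real" and r :: real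
    and Y :: "nat \<Rightarrow> 'a \<Rightarrow> nat"
  assumes "prob_space M"
    and \<theta>_pos: "\<And>k. k \<ge> 1 \<Longrightarrow> \<theta> k > 0"
    and r_pos: "0 < r"
    and radius: "conv_radius (\<lambda>k. \<theta> k / real k) = ereal r"
    and indep: "prob_space.indep_vars M (\<lambda>_. count_space UNIV) Y {1..}"
    and poisson: "\<And>l. l \<ge> 1 \<Longrightarrow>
       distr M (count_space UNIV) (Y l) = measure_pmf (poisson_pmf (r ^ l * \<theta> l / real l))"
  shows "AE \<omega> in M. conv_radius
            (\<lambda>k. real (\<Sum>l\<in>{l\<in>{1..k}. l dvd k}. l * Y l \<omega>) / real k) \<ge> 1"
proof -
  have meas: "Y l \<in> M \<rightarrow>\<^sub>M count_space UNIV" if "l \<ge> 1" for l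
    using indep that unfolding prob_space.indep_vars_def[OF assms(1)] by auto
  define \<rho> where "\<rho> = (\<lambda>n::nat. 1 - 1 / real (n + 2))"
  have r0: "0 < \<rho> n" and r1: "\<rho> n < 1" for n unfolding \<rho>_def by (auto simp: field_simps)
  have "\<forall>n. AE \<omega> in M. summable (\<lambda>l. real (Y l \<omega>) * \<rho> n ^ l)"
    using AE_summable_rho[OF assms(1) \<theta>_pos r_pos radius meas poisson r0 r1] by blast
  then have "AE \<omega> in M. \<forall>n. summable (\<lambda>l. real (Y l \<omega>) * \<rho> n ^ l)"
    by (subst AE_all_countable)
  then show ?thesis
  proof (rule eventually_mono)
    fix \<omega> assume all: "\<forall>n. summable (\<lambda>l. real (Y l \<omega>) * \<rho> n ^ l)"
    let ?R = "conv_radius (\<lambda>k. real (\<Sum>l\<in>{l\<in>{1..k}. l dvd k}. l * Y l \<omega>) / real k)"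
    have ge: "ereal (\<rho> n ^ 3) \<le> ?R" for n
      using det_bound[OF r0 r1 all[rule_format, of n]] .
    show "?R \<ge> 1"
    proof (rule ccontr)
      assume "\<not> ?R \<ge> 1"
      then have lt: "?R < 1" by simp
      have "?R \<ge> 0" by (rule conv_radius_nonneg)
      with lt obtain c where c: "?R = ereal c" "c < 1"
        by (cases ?R) auto
      obtain n :: nat where n: "3 / (1 - c) < real n" using reals_Archimedean2 by blast
      have "1 + real 3 * (- 1 / real (n + 2)) \<le> (1 + (- 1 / real (n + 2))) ^ 3"
        by (rule Bernoulli_inequality) (simp add: field_simps)
      then have b: "1 - 3 / real (n + 2) \<le> \<rho> n ^ 3" unfolding \<rho>_def by simp
      have "3 / real (n + 2) < 1 - c"
      proof -
        have "3 < (1 - c) * real n" using n c by (simp add: field_simps)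
        also have "\<dots> \<le> (1 - c) * real (n + 2)" using c by (intro mult_left_mono) auto
        finally show ?thesis by (simp add: field_simps)
      qed
      with b have "c < \<rho> n ^ 3" by simp
      with ge[of n] c show False by simp
    qed
  qed
qed

end
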